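(* Let $0\le k\le n$ be integers and let $H\le\mathrm{Sym}_n$ be the stabiliser of a $k$-element subset of $\{1,\dots,n\}$, so $H\cong\mathrm{Sym}_k\times\mathrm{Sym}_{n-k}$. Then for every subgroup $G\le\mathrm{Sym}_n$, \[ |Z_{\mathrm{Sym}_n}(G)|\le 2^n|Z_H(G)| . \] In addition, let $u:\mathbb N\to\mathbb R$ be a function such that $u(m)^{-1}|K|^{1/2}\le|K[2]|\le u(m)|K|^{1/2}$ for every $m$ and every $K\le\mathrm{Sym}_m$. Then \[ |Z_{\mathrm{Sym}_n}(G)[2]|\le 2^n u(n)^2\,|Z_H(G)[2]| . \]
   Context: $Z_X(G)$ denotes the centraliser of $G$ in $X$, i.e. the elements of $X$ commuting with every element of $G$. For a group $K$, $K[2]=\{g\in K:g^2=1\}$ (including the identity). A function $u$ as in the hypothesis exists with $\log u(n)=O(n\log\log n)$. *)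

theory Defs
  imports "HOL-Algebra.Sym_Groups" Complex_Main
begin

definition centraliser :: "nat \<Rightarrow> (nat \<Rightarrow> nat) set \<Rightarrow> (nat \<Rightarrow> nat) set \<Rightarrow> (nat \<Rightarrow> nat) set" where
  "centraliser n X G = {x \<in> X. \<forall>g\<in>G. x \<otimes>\<^bsub>sym_group n\<^esub> g = g \<otimes>\<^bsub>sym_group n\<^esub> x}"

definition involset :: "nat \<Rightarrow> (nat \<Rightarrow> nat) set \<Rightarrow> (nat \<Rightarrow> nat) set" where
  "involset n K = {g \<in> K. g \<otimes>\<^bsub>sym_group n\<^esub> g = \<one>\<^bsub>sym_group n\<^esub>}"

definition setstab :: "nat \<Rightarrow> nat set \<Rightarrow> (nat \<Rightarrow> nat) set" where
  "setstab n S = {p \<in> carrier (sym_group n). p ` S = S}"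

end

theory Submission
  imports Defs
begin

lemma cent_subgroup:
  assumes "G \<subseteq> carrier (sym_group n)"
  shows "subgroup (centraliser n (carrier (sym_group n)) G) (sym_group n)"
proof -
  interpret SG: group "sym_group n" by (rule sym_group_is_group)
  show ?thesis
  proof (rule SG.subgroupI)
    show "centraliser n (carrier (sym_group n)) G \<subseteq> carrier (sym_group n)"
      unfolding centraliser_def by auto
    show "centraliser n (carrier (sym_group n)) G \<noteq> {}"
      proof -
      have "\<one>\<^bsub>sym_group n\<^esub> \<in> centraliser n (carrier (sym_group n)) G"
        unfolding centraliser_def using assms by (auto simp: SG.l_one SG.r_one subset_iff)
      thus ?thesis by blast
    qed
  next
    fix a assume a: "a \<in> centraliser n (carrier (sym_group n)) G"
    hence ac: "a \<in> carrier (sym_group n)" and comm: "\<And>g. g \<in> G \<Longrightarrow> a \<otimes>\<^bsub>sym_group n\<^esub> g = g \<otimes>\<^bsub>sym_group n\<^esub> a"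
      unfolding centraliser_def by auto
    have "inv\<^bsub>sym_group n\<^esub> a \<otimes>\<^bsub>sym_group n\<^esub> g = g \<otimes>\<^bsub>sym_group n\<^esub> inv\<^bsub>sym_group n\<^esub> a" if g: "g \<in> G" for g
    proof -
      have gc: "g \<in> carrier (sym_group n)" using g assms by auto
      have "inv\<^bsub>sym_group n\<^esub> a \<otimes>\<^bsub>sym_group n\<^esub> g
          = inv\<^bsub>sym_group n\<^esub> a \<otimes>\<^bsub>sym_group n\<^esub> (g \<otimes>\<^bsub>sym_group n\<^esub> a) \<otimes>\<^bsub>sym_group n\<^esub> inv\<^bsub>sym_group n\<^esub> a"
        using ac gc by (simp add: SG.m_assoc del: sym_group_inv_equality)
      also have "\<dots> = inv\<^bsub>sym_group n\<^esub> a \<otimes>\<^bsub>sym_group n\<^esub> (a \<otimes>\<^bsub>sym_group n\<^esub> g) \<otimes>\<^bsub>sym_group n\<^esub> inv\<^bsub>sym_group n\<^esub> a"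
        using comm[OF g] by simp
      also have "\<dots> = g \<otimes>\<^bsub>sym_group n\<^esub> inv\<^bsub>sym_group n\<^esub> a"
        using ac gc by (simp add: SG.m_assoc[symmetric] del: sym_group_inv_equality)
      finally show ?thesis .
    qed
    thus "inv\<^bsub>sym_group n\<^esub> a \<in> centraliser n (carrier (sym_group n)) G"
      unfolding centraliser_def using ac SG.inv_closed[OF ac] by blast
  next
    fix a b assume "a \<in> centraliser n (carrier (sym_group n)) G" "b \<in> centraliser n (carrier (sym_group n)) G"
    hence ac: "a \<in> carrier (sym_group n)" and ca: "\<And>g. g \<in> G \<Longrightarrow> a \<otimes>\<^bsub>sym_group n\<^esub> g = g \<otimes>\<^bsub>sym_group n\<^esub> a"
      and bc: "b \<in> carrier (sym_group n)" and cb: "\<And>g. g \<in> G \<Longrightarrow> b \<otimes>\<^bsub>sym_group n\<^esub> g = g \<otimes>\<^bsub>sym_group n\<^esub> b"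
      unfolding centraliser_def by auto
    have "a \<otimes>\<^bsub>sym_group n\<^esub> b \<otimes>\<^bsub>sym_group n\<^esub> g = g \<otimes>\<^bsub>sym_group n\<^esub> (a \<otimes>\<^bsub>sym_group n\<^esub> b)" if g: "g \<in> G" for g
    proof -
      have gc: "g \<in> carrier (sym_group n)" using g assms by auto
      have "a \<otimes>\<^bsub>sym_group n\<^esub> b \<otimes>\<^bsub>sym_group n\<^esub> g = a \<otimes>\<^bsub>sym_group n\<^esub> (g \<otimes>\<^bsub>sym_group n\<^esub> b)"
        using ac bc gc cb[OF g] by (simp add: SG.m_assoc del: sym_group_inv_equality)
      also have "\<dots> = g \<otimes>\<^bsub>sym_group n\<^esub> (a \<otimes>\<^bsub>sym_group n\<^esub> b)"
        using ac bc gc ca[OF g] by (simp add: SG.m_assoc[symmetric] del: sym_group_inv_equality)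
      finally show ?thesis .
    qed
    thus "a \<otimes>\<^bsub>sym_group n\<^esub> b \<in> centraliser n (carrier (sym_group n)) G"
      unfolding centraliser_def using ac bc by auto
  qed
qed

lemma setstab_subgroup: "subgroup (setstab n S) (sym_group n)"
proof -
  interpret SG: group "sym_group n" by (rule sym_group_is_group)
  show ?thesis
  proof (rule SG.subgroupI)
    show "setstab n S \<subseteq> carrier (sym_group n)" unfolding setstab_def by auto
    show "setstab n S \<noteq> {}" unfolding setstab_def
      by (auto intro!: exI[of _ id] simp: sym_group_carrier permutes_id)
  next
    fix a assume "a \<in> setstab n S"
    hence ac: "a permutes {1..n}" and aS: "a ` S = S" unfolding setstab_def sym_group_carrier by auto
    have "inv' a ` S = inv' a ` (a ` S)" using aS by simp
    also have "\<dots> = (inv' a \<circ> a) ` S" by (rule image_comp)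
    also have "\<dots> = S" by (simp add: permutes_inv_o(2)[OF ac])
    finally have "inv' a ` S = S" .
    thus "inv\<^bsub>sym_group n\<^esub> a \<in> setstab n S"
      using ac by (simp add: setstab_def sym_group_carrier permutes_inv)
  next
    fix a b assume "a \<in> setstab n S" "b \<in> setstab n S"
    hence "a permutes {1..n}" "b permutes {1..n}" "a ` S = S" "b ` S = S"
      unfolding setstab_def sym_group_carrier by auto
    moreover have "(a \<circ> b) ` S = a ` (b ` S)" by (rule image_comp[symmetric])
    ultimately show "a \<otimes>\<^bsub>sym_group n\<^esub> b \<in> setstab n S"
      unfolding setstab_def sym_group_mult sym_group_carrier
      by (simp add: permutes_compose)
  qed
qed

lemma part1:
  assumes S: "S \<subseteq> {1..n}" and Gs: "G \<subseteq> carrier (sym_group n)"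
  shows "card (centraliser n (carrier (sym_group n)) G)
           \<le> 2 ^ n * card (centraliser n (setstab n S) G)"
proof -
  interpret SG: group "sym_group n" by (rule sym_group_is_group)
  define Z where "Z = centraliser n (carrier (sym_group n)) G"
  define ZH where "ZH = centraliser n (setstab n S) G"
  have ZHeq: "ZH = Z \<inter> setstab n S"
    unfolding ZH_def Z_def centraliser_def setstab_def by auto
  have Zsub: "subgroup Z (sym_group n)" unfolding Z_def by (rule cent_subgroup[OF Gs])
  have fin: "finite (carrier (sym_group n))"
    using sym_group_card_carrier[of n] card_ge_0_finite by (metis fact_gt_zero)
  have ZC: "Z \<subseteq> carrier (sym_group n)" unfolding Z_def centraliser_def by auto
  have finZ: "finite Z" using ZC fin finite_subset by blast
  have finZH: "finite ZH" using ZHeq finZ by simp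
  define F where "F T = {z \<in> Z. z ` S = T}" for T
  have fiber: "card (F T) \<le> card ZH" for T
  proof (cases "F T = {}")
    case True then show ?thesis by simp
  next
    case False
    then obtain z0 where z0: "z0 \<in> Z" "z0 ` S = T" unfolding F_def by auto
    have z0p: "z0 permutes {1..n}" using z0 ZC sym_group_carrier by blast
    have "inj_on (\<lambda>z. inv' z0 \<circ> z) (F T)"
    proof (rule inj_onI)
      fix x y assume "inv' z0 \<circ> x = inv' z0 \<circ> y"
      hence "z0 \<circ> (inv' z0 \<circ> x) = z0 \<circ> (inv' z0 \<circ> y)" by simp
      hence "(z0 \<circ> inv' z0) \<circ> x = (z0 \<circ> inv' z0) \<circ> y" by (simp only: o_assoc)
      thus "x = y" by (simp add: permutes_inv_o(1)[OF z0p])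
    qed
    moreover have "(\<lambda>z. inv' z0 \<circ> z) ` (F T) \<subseteq> ZH"
    proof
      fix w assume "w \<in> (\<lambda>z. inv' z0 \<circ> z) ` (F T)"
      then obtain z where z: "z \<in> Z" "z ` S = T" and w: "w = inv' z0 \<circ> z" unfolding F_def by auto
      have "inv\<^bsub>sym_group n\<^esub> z0 \<otimes>\<^bsub>sym_group n\<^esub> z \<in> Z"
        by (rule subgroup.m_closed[OF Zsub subgroup.m_inv_closed[OF Zsub z0(1)] z(1)])
      moreover have "inv\<^bsub>sym_group n\<^esub> z0 = inv' z0" using z0(1) ZC by auto
      ultimately have wZ: "w \<in> Z" using w by (simp add: sym_group_mult)
      have "w ` S = inv' z0 ` (z ` S)" unfolding w by (rule image_comp[symmetric])
      also have "\<dots> = inv' z0 ` (z0 ` S)" using z z0 by simp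
      also have "\<dots> = S" by (simp add: image_comp permutes_inv_o(2)[OF z0p])
      finally have "w ` S = S" .
      thus "w \<in> ZH" using ZHeq wZ ZC unfolding setstab_def by auto
    qed
    ultimately show ?thesis by (rule card_inj_on_le[OF _ _ finZH])
  qed
  have img: "(\<lambda>z. z ` S) ` Z \<subseteq> Pow {1..n}"
  proof
    fix T assume "T \<in> (\<lambda>z. z ` S) ` Z"
    then obtain z where z: "z \<in> Z" "T = z ` S" by auto
    have "z permutes {1..n}" using z ZC sym_group_carrier by blast
    hence "z ` {1..n} = {1..n}" by (rule permutes_image)
    hence "z ` S \<subseteq> {1..n}" using S by blast
    thus "T \<in> Pow {1..n}" using z by simp
  qed
  have eqZ: "(\<Union>T\<in>(\<lambda>z. z ` S) ` Z. F T) = Z" unfolding F_def by blast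
  have finI: "finite ((\<lambda>z. z ` S) ` Z)" using finZ by simp
  have "card Z \<le> (\<Sum>T\<in>(\<lambda>z. z ` S) ` Z. card (F T))"
    using card_UN_le[OF finI, of F] by (simp only: eqZ)
  also have "\<dots> \<le> card ((\<lambda>z. z ` S) ` Z) * card ZH"
    using sum_bounded_above[of "(\<lambda>z. z ` S) ` Z" "\<lambda>T. card (F T)" "card ZH"] fiber by auto
  also have "\<dots> \<le> 2 ^ n * card ZH"
  proof -
    have "card ((\<lambda>z. z ` S) ` Z) \<le> card (Pow {1..n})"
      using img by (rule card_mono[rotated]) simp
    also have "\<dots> = 2 ^ n" by (simp add: card_Pow)
    finally show ?thesis by simp
  qed
  finally show ?thesis unfolding Z_def ZH_def .
qed

theorem lemmaA3:
  fixes n k :: nat and S :: "nat set" and G :: "(nat \<Rightarrow> nat) set"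
  assumes "k \<le> n"
    and "S \<subseteq> {1..n}" and "card S = k"
    and "subgroup G (sym_group n)"
  shows "real (card (centraliser n (carrier (sym_group n)) G))
           \<le> 2 ^ n * real (card (centraliser n (setstab n S) G))
       \<and> (\<forall>u :: nat \<Rightarrow> real.
            (\<forall>m K. subgroup K (sym_group m) \<longrightarrow>
               inverse (u m) * sqrt (real (card K)) \<le> real (card (involset m K))
             \<and> real (card (involset m K)) \<le> u m * sqrt (real (card K)))
          \<longrightarrow> real (card (involset n (centraliser n (carrier (sym_group n)) G)))
               \<le> 2 ^ n * (u n)^2 * real (card (involset n (centraliser n (setstab n S) G))))"
proof -
  interpret SG: group "sym_group n" by (rule sym_group_is_group)
  have Gs: "G \<subseteq> carrier (sym_group n)" using assms(4) subgroup.subset by blast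
  define Z where "Z = centraliser n (carrier (sym_group n)) G"
  define ZH where "ZH = centraliser n (setstab n S) G"
  have p1n: "card Z \<le> 2 ^ n * card ZH" unfolding Z_def ZH_def by (rule part1[OF assms(2) Gs])
  hence "real (card Z) \<le> real (2 ^ n * card ZH)" by (rule of_nat_mono)
  hence p1: "real (card Z) \<le> 2 ^ n * real (card ZH)" by simp
  have ZHeq: "ZH = Z \<inter> setstab n S"
    unfolding ZH_def Z_def centraliser_def setstab_def by auto
  have Zsub: "subgroup Z (sym_group n)" unfolding Z_def by (rule cent_subgroup[OF Gs])
  have ZHsub: "subgroup ZH (sym_group n)" unfolding ZHeq
    by (rule SG.subgroups_Inter_pair[OF Zsub setstab_subgroup])
  have part2: "real (card (involset n Z)) \<le> 2 ^ n * (u n)^2 * real (card (involset n ZH))"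
    if hyp: "\<forall>m K. subgroup K (sym_group m) \<longrightarrow>
               inverse (u m) * sqrt (real (card K)) \<le> real (card (involset m K))
             \<and> real (card (involset m K)) \<le> u m * sqrt (real (card K))" for u :: "nat \<Rightarrow> real"
  proof -
    have h: "inverse (u m) * sqrt (real (card K)) \<le> real (card (involset m K))
             \<and> real (card (involset m K)) \<le> u m * sqrt (real (card K))"
      if "subgroup K (sym_group m)" for m K using hyp that by simp
    have triv: "involset n {\<one>\<^bsub>sym_group n\<^esub>} = {\<one>\<^bsub>sym_group n\<^esub>}"
      unfolding involset_def by auto
    have "real (card (involset n {\<one>\<^bsub>sym_group n\<^esub>})) \<le> u n * sqrt (real (card {\<one>\<^bsub>sym_group n\<^esub>}))"
      using h[OF SG.triv_subgroup] by (rule conjunct2)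
    hence u1: "1 \<le> u n" unfolding triv by simp
    have c1: "real (card (involset n Z)) \<le> u n * sqrt (real (card Z))" using h[OF Zsub] by (rule conjunct2)
    have c2: "inverse (u n) * sqrt (real (card ZH)) \<le> real (card (involset n ZH))" using h[OF ZHsub] by (rule conjunct1)
    hence c2': "sqrt (real (card ZH)) \<le> u n * real (card (involset n ZH))"
      using u1 by (simp add: field_simps)
    have "sqrt (real (card Z)) \<le> sqrt (2 ^ n) * sqrt (real (card ZH))"
      using p1 by (metis real_sqrt_le_iff real_sqrt_mult)
    also have "\<dots> \<le> sqrt (2 ^ n) * (u n * real (card (involset n ZH)))"
      using c2' by (simp add: mult_left_mono)
    finally have "sqrt (real (card Z)) \<le> sqrt (2 ^ n) * (u n * real (card (involset n ZH)))" .
    hence "u n * sqrt (real (card Z)) \<le> u n * (sqrt (2 ^ n) * (u n * real (card (involset n ZH))))"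
      using u1 by (intro mult_left_mono) auto
    hence "real (card (involset n Z)) \<le> u n * (sqrt (2 ^ n) * (u n * real (card (involset n ZH))))"
      by (rule order.trans[OF c1])
    also have "\<dots> = sqrt (2 ^ n) * (u n)^2 * real (card (involset n ZH))"
      by (simp add: power2_eq_square)
    also have "\<dots> \<le> 2 ^ n * (u n)^2 * real (card (involset n ZH))"
    proof -
      have "(1::real) \<le> 2 ^ n" by simp
      hence "sqrt (2 ^ n) \<le> (2::real) ^ n"
      proof -
        have a: "1 \<le> sqrt ((2::real) ^ n)" using \<open>(1::real) \<le> 2 ^ n\<close> by simp
        have "sqrt ((2::real) ^ n) * 1 \<le> sqrt (2 ^ n) * sqrt (2 ^ n)"
          using a by (intro mult_left_mono) auto
        also have "\<dots> = 2 ^ n" by simp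
        finally show ?thesis by simp
      qed
      thus ?thesis by (intro mult_right_mono) auto
    qed
    finally show ?thesis .
  qed
  show ?thesis
  proof (intro conjI allI impI)
    show "real (card (centraliser n (carrier (sym_group n)) G))
           \<le> 2 ^ n * real (card (centraliser n (setstab n S) G))" using p1 unfolding Z_def ZH_def .
  next
    fix u :: "nat \<Rightarrow> real"
    assume "\<forall>m K. subgroup K (sym_group m) \<longrightarrow>
               inverse (u m) * sqrt (real (card K)) \<le> real (card (involset m K))
             \<and> real (card (involset m K)) \<le> u m * sqrt (real (card K))"
    from part2[OF this] show "real (card (involset n (centraliser n (carrier (sym_group n)) G)))
               \<le> 2 ^ n * (u n)^2 * real (card (involset n (centraliser n (setstab n S) G)))"
      unfolding Z_def ZH_def .
  qed
qed

end
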